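(* Let $X$ be a nonempty set, $G\le S_X$ and $F=N_{S_X}(G)$. For every $x\in X/G$ and $y\in xG$ fix $g_y\in G$ with $xg_y=y$. For $f\in F$ and $\Lambda=(\lambda_x:x\in X/G)$ define $\Lambda f=(\kappa_x:x\in X/G)$ by $\kappa_x=((\lambda_{yg_y^{-1}})^{g_y})^f$ where $y=xf^{-1}$. Then: (i) this rule defines an action of $F$ on each of $\mathrm{Fol}_r(G)$, $\mathrm{Fol}_q(G)$, $\mathrm{Env}_r(G)$ and $\mathrm{Env}_q(G)$; (ii) the orbits of $F$ on $\mathrm{Env}_r(G)$ (resp. $\mathrm{Env}_q(G)$) are in one-to-one correspondence with isomorphism types of racks (resp. quandles) defined on $X$ with left multiplication group equal to $G$; (iii) if an orbit of $F$ on $\mathrm{Fol}_r(G)$ (resp. $\mathrm{Fol}_q(G)$) contains an element of $\mathrm{Env}_r(G)$ (resp. $\mathrm{Env}_q(G)$), then the entire orbit is a subset of $\mathrm{Env}_r(G)$ (resp. $\mathrm{Env}_q(G)$).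
   Context: Permutations act on the right ($xf$ is the image of $x$ under $f$; $fg$ means $f$ first, then $g$); $g^f=f^{-1}gf$, $f^G=\{f^g:g\in G\}$. For $G\le S_X$, $xG$ is the orbit of $x$, $G_x$ its stabilizer, $X/G$ a fixed complete set of orbit representatives; $C_G(H)$, $N_G(H)$, $Z(H)$ denote centralizer, normalizer and center. A left quasigroup is a groupoid $(X,* )$ whose left translations $L_x$ ($yL_x=x*y$) are bijections; a rack is a left quasigroup with $x*(y*z)=(x*y)*(x*z)$; a quandle is a rack with $x*x=x$; the left multiplication group is $\mathrm{LMlt}(X,* )=\langle L_x:x\in X\rangle$. A pair $(G,(\lambda_x:x\in X/G))$ is a rack folder (resp. quandle folder) if $\lambda_x\in C_G(G_x)$ (resp. $\lambda_x\in Z(G_x)$) for every $x\in X/G$, and a rack envelope (resp. quandle envelope) if moreover $\langle\bigcup_{x\in X/G}\lambda_x^G\rangle=G$. $\mathrm{Fol}_r(G)$, $\mathrm{Fol}_q(G)$, $\mathrm{Env}_r(G)$, $\mathrm{Env}_q(G)$ are the sets of rack folders, quandle folders, rack envelopes and quandle envelopes of the form $(G,\Lambda)$ (identified with the tuples $\Lambda$). A rack envelope $(G,\Lambda)$ corresponds to the rack $(X,* )$ with $L_y=(\lambda_x)^g$ whenever $x\in X/G$, $y\in xG$, $g\in G$, $xg=y$. *)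

theory Defs
  imports "HOL-Combinatorics.Permutations"
begin

text \<open>Right action x f is the function value f x; the product fg
(f first, then g) is g o f; conjugation g^f = f^-1 g f is the function f o g o inv f.\<close>

definition perm_subgroup :: "'a set \<Rightarrow> ('a \<Rightarrow> 'a) set \<Rightarrow> bool" where
  "perm_subgroup X G \<longleftrightarrow> G \<subseteq> {p. p permutes X} \<and> id \<in> G \<and>
     (\<forall>p\<in>G. \<forall>q\<in>G. p \<circ> q \<in> G) \<and> (\<forall>p\<in>G. inv p \<in> G)"

definition perm_gen :: "'a set \<Rightarrow> ('a \<Rightarrow> 'a) set \<Rightarrow> ('a \<Rightarrow> 'a) set" where
  "perm_gen X A = \<Inter>{H. perm_subgroup X H \<and> A \<subseteq> H}"

definition conj :: "('a \<Rightarrow> 'a) \<Rightarrow> ('a \<Rightarrow> 'a) \<Rightarrow> ('a \<Rightarrow> 'a)" where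
  "conj l f = f \<circ> l \<circ> inv f"

definition conj_class :: "('a \<Rightarrow> 'a) set \<Rightarrow> ('a \<Rightarrow> 'a) \<Rightarrow> ('a \<Rightarrow> 'a) set" where
  "conj_class G l = {conj l h | h. h \<in> G}"

definition normalizer :: "'a set \<Rightarrow> ('a \<Rightarrow> 'a) set \<Rightarrow> ('a \<Rightarrow> 'a) set" where
  "normalizer X G = {f. f permutes X \<and> (\<lambda>h. conj h f) ` G = G}"

definition orbit :: "('a \<Rightarrow> 'a) set \<Rightarrow> 'a \<Rightarrow> 'a set" where
  "orbit G x = {h x | h. h \<in> G}"

definition stab :: "('a \<Rightarrow> 'a) set \<Rightarrow> 'a \<Rightarrow> ('a \<Rightarrow> 'a) set" where
  "stab G x = {h \<in> G. h x = x}"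

definition centralizer :: "('a \<Rightarrow> 'a) set \<Rightarrow> ('a \<Rightarrow> 'a) set \<Rightarrow> ('a \<Rightarrow> 'a) set" where
  "centralizer G H = {c \<in> G. \<forall>h\<in>H. c \<circ> h = h \<circ> c}"

definition center :: "('a \<Rightarrow> 'a) set \<Rightarrow> ('a \<Rightarrow> 'a) set" where
  "center H = {c \<in> H. \<forall>h\<in>H. c \<circ> h = h \<circ> c}"

definition orbit_reps :: "'a set \<Rightarrow> ('a \<Rightarrow> 'a) set \<Rightarrow> 'a set \<Rightarrow> bool" where
  "orbit_reps X G R \<longleftrightarrow> R \<subseteq> X \<and> (\<forall>y\<in>X. \<exists>!r. r \<in> R \<and> y \<in> orbit G r)"

text \<open>Tuples (lambda_x : x in R) are functions, extended by id outside R.\<close>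
definition Fol_r :: "('a \<Rightarrow> 'a) set \<Rightarrow> 'a set \<Rightarrow> ('a \<Rightarrow> 'a \<Rightarrow> 'a) set" where
  "Fol_r G R = {\<Lambda>. (\<forall>x\<in>R. \<Lambda> x \<in> centralizer G (stab G x)) \<and> (\<forall>x. x \<notin> R \<longrightarrow> \<Lambda> x = id)}"

definition Fol_q :: "('a \<Rightarrow> 'a) set \<Rightarrow> 'a set \<Rightarrow> ('a \<Rightarrow> 'a \<Rightarrow> 'a) set" where
  "Fol_q G R = {\<Lambda>. (\<forall>x\<in>R. \<Lambda> x \<in> center (stab G x)) \<and> (\<forall>x. x \<notin> R \<longrightarrow> \<Lambda> x = id)}"

definition generates :: "'a set \<Rightarrow> ('a \<Rightarrow> 'a) set \<Rightarrow> 'a set \<Rightarrow> ('a \<Rightarrow> 'a \<Rightarrow> 'a) \<Rightarrow> bool" where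
  "generates X G R \<Lambda> \<longleftrightarrow> perm_gen X (\<Union>x\<in>R. conj_class G (\<Lambda> x)) = G"

definition Env_r :: "'a set \<Rightarrow> ('a \<Rightarrow> 'a) set \<Rightarrow> 'a set \<Rightarrow> ('a \<Rightarrow> 'a \<Rightarrow> 'a) set" where
  "Env_r X G R = {\<Lambda> \<in> Fol_r G R. generates X G R \<Lambda>}"

definition Env_q :: "'a set \<Rightarrow> ('a \<Rightarrow> 'a) set \<Rightarrow> 'a set \<Rightarrow> ('a \<Rightarrow> 'a \<Rightarrow> 'a) set" where
  "Env_q X G R = {\<Lambda> \<in> Fol_q G R. generates X G R \<Lambda>}"

definition act :: "'a set \<Rightarrow> ('a \<Rightarrow> 'a \<Rightarrow> 'a) \<Rightarrow> ('a \<Rightarrow> 'a) \<Rightarrow> ('a \<Rightarrow> 'a \<Rightarrow> 'a) \<Rightarrow> ('a \<Rightarrow> 'a \<Rightarrow> 'a)" where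
  "act R g f \<Lambda> = (\<lambda>x. if x \<in> R then
      (let y = inv f x in conj (conj (\<Lambda> (inv (g y) y)) (g y)) f) else id)"

definition rack_on :: "'a set \<Rightarrow> ('a \<Rightarrow> 'a \<Rightarrow> 'a) \<Rightarrow> bool" where
  "rack_on X op \<longleftrightarrow> (\<forall>x\<in>X. \<forall>y\<in>X. op x y \<in> X) \<and> (\<forall>x\<in>X. bij_betw (op x) X X) \<and>
     (\<forall>x\<in>X. \<forall>y\<in>X. \<forall>z\<in>X. op x (op y z) = op (op x y) (op x z))"

definition quandle_on :: "'a set \<Rightarrow> ('a \<Rightarrow> 'a \<Rightarrow> 'a) \<Rightarrow> bool" where
  "quandle_on X op \<longleftrightarrow> rack_on X op \<and> (\<forall>x\<in>X. op x x = x)"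

definition Lperm :: "'a set \<Rightarrow> ('a \<Rightarrow> 'a \<Rightarrow> 'a) \<Rightarrow> 'a \<Rightarrow> ('a \<Rightarrow> 'a)" where
  "Lperm X op x = (\<lambda>y. if y \<in> X then op x y else y)"

definition LMlt :: "'a set \<Rightarrow> ('a \<Rightarrow> 'a \<Rightarrow> 'a) \<Rightarrow> ('a \<Rightarrow> 'a) set" where
  "LMlt X op = perm_gen X (Lperm X op ` X)"

definition rack_iso :: "'a set \<Rightarrow> ('a \<Rightarrow> 'a \<Rightarrow> 'a) \<Rightarrow> ('a \<Rightarrow> 'a \<Rightarrow> 'a) \<Rightarrow> bool" where
  "rack_iso X op1 op2 \<longleftrightarrow> (\<exists>\<phi>. bij_betw \<phi> X X \<and> (\<forall>x\<in>X. \<forall>y\<in>X. \<phi> (op1 x y) = op2 (\<phi> x) (\<phi> y)))"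

text \<open>Rack of an envelope: L_y = (lambda_x)^g with x in R, x g = y (we take g = g_y).\<close>
definition rack_of :: "'a set \<Rightarrow> ('a \<Rightarrow> 'a \<Rightarrow> 'a) \<Rightarrow> ('a \<Rightarrow> 'a \<Rightarrow> 'a) \<Rightarrow> ('a \<Rightarrow> 'a \<Rightarrow> 'a)" where
  "rack_of R g \<Lambda> = (\<lambda>y. conj (\<Lambda> (inv (g y) y)) (g y))"

end

theory Submission
  imports Defs
begin

lemma conj_id[simp]: "conj l id = l"
  by (simp add: conj_def)

lemma conj_conj: "bij a \<Longrightarrow> bij b \<Longrightarrow> conj (conj l a) b = conj l (b \<circ> a)"
  by (simp add: conj_def o_inv_distrib o_assoc)

lemma conj_comp: "bij f \<Longrightarrow> conj a f \<circ> conj b f = conj (a \<circ> b) f"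
  unfolding conj_def by (simp add: fun_eq_iff bij_is_inj inv_f_f)

lemma conj_app: "bij f \<Longrightarrow> conj l f (f x) = f (l x)"
  by (simp add: conj_def bij_is_inj inv_f_f)

lemma conj_fixed_commute: "bij h \<Longrightarrow> conj l h = l \<Longrightarrow> h \<circ> l = l \<circ> h"
  unfolding conj_def by (metis bij_is_inj comp_assoc comp_id inv_o_cancel)

lemma commute_conj_fixed: "bij h \<Longrightarrow> h \<circ> l = l \<circ> h \<Longrightarrow> conj l h = l"
  unfolding conj_def by (metis bij_is_surj comp_assoc comp_id surj_iff)

lemma conj_inv: "bij f \<Longrightarrow> bij a \<Longrightarrow> inv (conj a f) = conj (inv a) f"
proof -
  assume f: "bij f" and a: "bij a"
  have "inv (f \<circ> (a \<circ> inv f)) = inv (a \<circ> inv f) \<circ> inv f"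
    by (rule o_inv_distrib[OF f bij_comp[OF bij_imp_bij_inv[OF f] a]])
  also have "inv (a \<circ> inv f) = inv (inv f) \<circ> inv a"
    by (rule o_inv_distrib[OF a bij_imp_bij_inv[OF f]])
  finally show ?thesis unfolding conj_def using inv_inv_eq[OF f] by (metis comp_assoc)
qed

lemma conj_cancel1: "bij f \<Longrightarrow> conj (conj h f) (inv f) = h"
  by (simp add: conj_conj bij_imp_bij_inv bij_is_inj)

lemma conj_cancel2: "bij f \<Longrightarrow> conj (conj h (inv f)) f = h"
proof -
  assume f: "bij f"
  have "f \<circ> inv f = id" using f by (metis bij_is_surj surj_iff)
  then show ?thesis using f by (simp add: conj_conj bij_imp_bij_inv)
qed

lemma conj_permutes: "f permutes X \<Longrightarrow> h permutes X \<Longrightarrow> conj h f permutes X"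
  unfolding conj_def by (intro permutes_compose permutes_inv) auto

lemma Sperm_subgroup: "perm_subgroup X {p. p permutes X}"
  unfolding perm_subgroup_def by (auto intro: permutes_id permutes_compose permutes_inv)

lemma perm_gen_subgroup:
  assumes "A \<subseteq> {p. p permutes X}"
  shows "perm_subgroup X (perm_gen X A)" "A \<subseteq> perm_gen X A"
proof -
  let ?F = "{H. perm_subgroup X H \<and> A \<subseteq> H}"
  have ne: "{p. p permutes X} \<in> ?F" using assms Sperm_subgroup by auto
  show "A \<subseteq> perm_gen X A" unfolding perm_gen_def by auto
  show "perm_subgroup X (perm_gen X A)"
    unfolding perm_gen_def perm_subgroup_def[of X "\<Inter> ?F"]
  proof (intro conjI)
    show "\<Inter> ?F \<subseteq> {p. p permutes X}" using ne by auto
    show "id \<in> \<Inter> ?F" by (auto simp: perm_subgroup_def)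
    show "\<forall>p\<in>\<Inter> ?F. \<forall>q\<in>\<Inter> ?F. p \<circ> q \<in> \<Inter> ?F" by (auto simp: perm_subgroup_def)
    show "\<forall>p\<in>\<Inter> ?F. inv p \<in> \<Inter> ?F" by (auto simp: perm_subgroup_def)
  qed
qed

lemma perm_gen_least: "perm_subgroup X H \<Longrightarrow> A \<subseteq> H \<Longrightarrow> perm_gen X A \<subseteq> H"
  unfolding perm_gen_def by auto

lemma conj_image_subgroup:
  assumes H: "perm_subgroup X H" and f: "f permutes X"
  shows "perm_subgroup X ((\<lambda>h. conj h f) ` H)"
proof -
  have bf: "bij f" using f permutes_bij by auto
  have Hp: "\<And>h. h \<in> H \<Longrightarrow> h permutes X" using H by (auto simp: perm_subgroup_def)
  show ?thesis unfolding perm_subgroup_def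
  proof (intro conjI ballI)
    show "(\<lambda>h. conj h f) ` H \<subseteq> {p. p permutes X}" using Hp conj_permutes f by auto
    have "conj id f = id" using bf by (simp add: conj_def) (metis bij_is_surj surj_iff)
    then show "id \<in> (\<lambda>h. conj h f) ` H" using H by (metis image_eqI perm_subgroup_def)
  next
    fix p q assume "p \<in> (\<lambda>h. conj h f) ` H" "q \<in> (\<lambda>h. conj h f) ` H"
    then obtain a b where "a \<in> H" "b \<in> H" "p = conj a f" "q = conj b f" by auto
    then show "p \<circ> q \<in> (\<lambda>h. conj h f) ` H" using conj_comp[OF bf] H
      by (auto simp: perm_subgroup_def)
  next
    fix p assume "p \<in> (\<lambda>h. conj h f) ` H"
    then obtain a where "a \<in> H" "p = conj a f" by auto
    moreover have "inv a \<in> H" using \<open>a \<in> H\<close> H by (auto simp: perm_subgroup_def)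
    moreover have "inv (conj a f) = conj (inv a) f"
      using conj_inv[OF bf] Hp[OF \<open>a \<in> H\<close>] permutes_bij by blast
    ultimately show "inv p \<in> (\<lambda>h. conj h f) ` H" by auto
  qed
qed

lemma perm_gen_conj_sub:
  assumes f: "f permutes X" and A: "A \<subseteq> {p. p permutes X}"
  shows "perm_gen X ((\<lambda>h. conj h f) ` A) \<subseteq> (\<lambda>h. conj h f) ` perm_gen X A"
  by (rule perm_gen_least) (use conj_image_subgroup[OF perm_gen_subgroup(1)[OF A] f] perm_gen_subgroup(2)[OF A] in auto)

lemma perm_gen_conj:
  assumes f: "f permutes X" and A: "A \<subseteq> {p. p permutes X}"
  shows "(\<lambda>h. conj h f) ` perm_gen X A = perm_gen X ((\<lambda>h. conj h f) ` A)"
proof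
  show "perm_gen X ((\<lambda>h. conj h f) ` A) \<subseteq> (\<lambda>h. conj h f) ` perm_gen X A"
    by (rule perm_gen_conj_sub[OF f A])
next
  have bf: "bij f" using f permutes_bij by auto
  have fi: "inv f permutes X" using f permutes_inv by auto
  have A': "(\<lambda>h. conj h f) ` A \<subseteq> {p. p permutes X}" using A conj_permutes f by auto
  have e: "(\<lambda>h. conj h (inv f)) ` (\<lambda>h. conj h f) ` A = A"
    by (simp add: image_image conj_cancel1[OF bf])
  have "perm_gen X A \<subseteq> (\<lambda>h. conj h (inv f)) ` perm_gen X ((\<lambda>h. conj h f) ` A)"
    using perm_gen_conj_sub[OF fi A'] e by simp
  then have "(\<lambda>h. conj h f) ` perm_gen X A \<subseteq> (\<lambda>h. conj h f) ` (\<lambda>h. conj h (inv f)) ` perm_gen X ((\<lambda>h. conj h f) ` A)"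
    by (rule image_mono)
  also have "\<dots> = perm_gen X ((\<lambda>h. conj h f) ` A)"
    by (simp add: image_image conj_cancel2[OF bf])
  finally show "(\<lambda>h. conj h f) ` perm_gen X A \<subseteq> perm_gen X ((\<lambda>h. conj h f) ` A)" .
qed


locale ctx =
  fixes X :: "'a set" and G :: "('a \<Rightarrow> 'a) set" and R :: "'a set" and g :: "'a \<Rightarrow> 'a \<Rightarrow> 'a"
  assumes sg: "perm_subgroup X G" and reps: "orbit_reps X G R"
    and gd: "\<forall>x\<in>R. \<forall>y\<in>orbit G x. g y \<in> G \<and> g y x = y"
begin

lemma G_perm: "h \<in> G \<Longrightarrow> h permutes X"
  using sg by (auto simp: perm_subgroup_def)
lemma G_bij: "h \<in> G \<Longrightarrow> bij h"
  using G_perm permutes_bij by blast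
lemma G_id: "id \<in> G"
  using sg by (auto simp: perm_subgroup_def)
lemma G_comp: "a \<in> G \<Longrightarrow> b \<in> G \<Longrightarrow> a \<circ> b \<in> G"
  using sg by (auto simp: perm_subgroup_def)
lemma G_inv: "a \<in> G \<Longrightarrow> inv a \<in> G"
  using sg by (auto simp: perm_subgroup_def)
lemma G_conj: "a \<in> G \<Longrightarrow> h \<in> G \<Longrightarrow> conj a h \<in> G"
  unfolding conj_def by (intro G_comp G_inv)
lemma G_sub: "G \<subseteq> {p. p permutes X}"
  using G_perm by auto

lemma R_sub: "R \<subseteq> X"
  using reps by (auto simp: orbit_reps_def)

lemma rep_ex: "y \<in> X \<Longrightarrow> \<exists>r\<in>R. y \<in> orbit G r"
  using reps by (auto simp: orbit_reps_def)

lemma rep_eq: "r \<in> R \<Longrightarrow> y \<in> orbit G r \<Longrightarrow> inv (g y) y = r \<and> g y \<in> G \<and> g y r = y"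
proof -
  assume r: "r \<in> R" and y: "y \<in> orbit G r"
  have a: "g y \<in> G" "g y r = y" using gd r y by auto
  have "inv (g y) (g y r) = r" using permutes_inverses(2)[OF G_perm[OF a(1)]] .
  then show ?thesis using a by simp
qed

lemma orbit_G: "y \<in> orbit G r \<Longrightarrow> h \<in> G \<Longrightarrow> h y \<in> orbit G r"
proof -
  assume y: "y \<in> orbit G r" and h: "h \<in> G"
  then obtain h' where "h' \<in> G" "y = h' r" by (auto simp: orbit_def)
  then have "h y = (h \<circ> h') r" "h \<circ> h' \<in> G" using G_comp h by auto
  then show ?thesis unfolding orbit_def by blast
qed

lemma R_orbit: "r \<in> orbit G r"
  unfolding orbit_def using G_id by (auto intro!: exI[of _ id])

lemma rep_X: "y \<in> X \<Longrightarrow> inv (g y) y \<in> R \<and> g y \<in> G \<and> g y (inv (g y) y) = y \<and> y \<in> orbit G (inv (g y) y)"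
proof -
  assume "y \<in> X"
  then obtain r where "r \<in> R" "y \<in> orbit G r" using rep_ex by blast
  then show ?thesis using rep_eq[of r y] by simp
qed

lemma g_stab: "r \<in> R \<Longrightarrow> g r \<in> stab G r"
  using rep_eq[OF _ R_orbit] by (auto simp: stab_def)

lemma Fr_G: "\<Lambda> \<in> Fol_r G R \<Longrightarrow> r \<in> R \<Longrightarrow> \<Lambda> r \<in> G"
  by (auto simp: Fol_r_def centralizer_def)
lemma Fr_comm: "\<Lambda> \<in> Fol_r G R \<Longrightarrow> r \<in> R \<Longrightarrow> h \<in> stab G r \<Longrightarrow> \<Lambda> r \<circ> h = h \<circ> \<Lambda> r"
  by (auto simp: Fol_r_def centralizer_def)
lemma Fr_out: "\<Lambda> \<in> Fol_r G R \<Longrightarrow> x \<notin> R \<Longrightarrow> \<Lambda> x = id"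
  by (auto simp: Fol_r_def)

lemma Fq_r: "\<Lambda> \<in> Fol_q G R \<Longrightarrow> \<Lambda> \<in> Fol_r G R"
  by (auto simp: Fol_q_def Fol_r_def center_def centralizer_def stab_def)
lemma Fq_fix: "\<Lambda> \<in> Fol_q G R \<Longrightarrow> r \<in> R \<Longrightarrow> \<Lambda> r r = r"
  by (auto simp: Fol_q_def center_def stab_def)

lemma L_rep: "\<Lambda> \<in> Fol_r G R \<Longrightarrow> r \<in> R \<Longrightarrow> rack_of R g \<Lambda> r = \<Lambda> r"
proof -
  assume F: "\<Lambda> \<in> Fol_r G R" and r: "r \<in> R"
  have e: "inv (g r) r = r" using rep_eq[OF r R_orbit] by auto
  have gs: "g r \<in> stab G r" using g_stab[OF r] .
  then have gG: "g r \<in> G" by (simp add: stab_def)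
  have "conj (\<Lambda> r) (g r) = \<Lambda> r"
    by (rule commute_conj_fixed[OF G_bij[OF gG]]) (rule Fr_comm[OF F r gs, symmetric])
  then show ?thesis unfolding rack_of_def e .
qed

lemma L_conj:
  assumes F: "\<Lambda> \<in> Fol_r G R" and y: "y \<in> X" and h: "h \<in> G"
  shows "rack_of R g \<Lambda> (h y) = conj (rack_of R g \<Lambda> y) h"
proof -
  define r where "r = inv (g y) y"
  have r: "r \<in> R" "g y \<in> G" "g y r = y" "y \<in> orbit G r" using rep_X[OF y] r_def by auto
  have hy: "h y \<in> orbit G r" using orbit_G[OF r(4) h] .
  have r2: "inv (g (h y)) (h y) = r" "g (h y) \<in> G" "g (h y) r = h y" using rep_eq[OF r(1) hy] by auto
  define k where "k = inv (g (h y)) \<circ> h \<circ> g y"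
  have kG: "k \<in> G" unfolding k_def using r r2 h G_comp G_inv by auto
  have kr: "k r = r" unfolding k_def using r r2 G_perm permutes_inverses(2) by (metis comp_apply)
  have ks: "k \<in> stab G r" using kG kr by (simp add: stab_def)
  have ck: "conj (\<Lambda> r) k = \<Lambda> r"
    by (rule commute_conj_fixed[OF G_bij[OF kG]]) (rule Fr_comm[OF F r(1) ks, symmetric])
  have hg: "h \<circ> g y = g (h y) \<circ> k" unfolding k_def
    by (simp add: comp_assoc[symmetric] permutes_inv_o(1)[OF G_perm[OF r2(2)]])
  have "conj (rack_of R g \<Lambda> y) h = conj (\<Lambda> r) (h \<circ> g y)"
    unfolding rack_of_def r_def[symmetric] by (rule conj_conj[OF G_bij[OF r(2)] G_bij[OF h]])
  also have "\<dots> = conj (conj (\<Lambda> r) k) (g (h y))"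
    unfolding hg by (rule conj_conj[OF G_bij[OF kG] G_bij[OF r2(2)], symmetric])
  also have "\<dots> = rack_of R g \<Lambda> (h y)" unfolding ck rack_of_def r2(1) ..
  finally show ?thesis by simp
qed

lemma L_G: "\<Lambda> \<in> Fol_r G R \<Longrightarrow> y \<in> X \<Longrightarrow> rack_of R g \<Lambda> y \<in> G"
proof -
  assume F: "\<Lambda> \<in> Fol_r G R" and y: "y \<in> X"
  have r: "inv (g y) y \<in> R" "g y \<in> G" using rep_X[OF y] by auto
  show ?thesis unfolding rack_of_def by (rule G_conj[OF Fr_G[OF F r(1)] r(2)])
qed

lemma L_perm: "\<Lambda> \<in> Fol_r G R \<Longrightarrow> y \<in> X \<Longrightarrow> rack_of R g \<Lambda> y permutes X"
  using L_G G_perm by blast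

lemma L_cent: "\<Lambda> \<in> Fol_r G R \<Longrightarrow> y \<in> X \<Longrightarrow> h \<in> stab G y \<Longrightarrow>
   rack_of R g \<Lambda> y \<circ> h = h \<circ> rack_of R g \<Lambda> y"
proof -
  assume F: "\<Lambda> \<in> Fol_r G R" and y: "y \<in> X" and h: "h \<in> stab G y"
  have hG: "h \<in> G" and hy: "h y = y" using h by (auto simp: stab_def)
  have "conj (rack_of R g \<Lambda> y) h = rack_of R g \<Lambda> y" using L_conj[OF F y hG] hy by simp
  from conj_fixed_commute[OF G_bij[OF hG] this] show ?thesis by simp
qed

lemma L_fix: "\<Lambda> \<in> Fol_q G R \<Longrightarrow> y \<in> X \<Longrightarrow> rack_of R g \<Lambda> y y = y"
proof -
  assume q: "\<Lambda> \<in> Fol_q G R" and y: "y \<in> X"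
  define r where "r = inv (g y) y"
  have r: "r \<in> R" "g y \<in> G" "g y r = y" using rep_X[OF y] r_def by auto
  have "rack_of R g \<Lambda> y y = g y (\<Lambda> r (inv (g y) y))"
    unfolding rack_of_def conj_def r_def by simp
  also have "\<dots> = y" using Fq_fix[OF q r(1)] r r_def by simp
  finally show ?thesis .
qed

lemma Lset: assumes F: "\<Lambda> \<in> Fol_r G R"
  shows "(\<Union>x\<in>R. conj_class G (\<Lambda> x)) = rack_of R g \<Lambda> ` X"
proof
  show "(\<Union>x\<in>R. conj_class G (\<Lambda> x)) \<subseteq> rack_of R g \<Lambda> ` X"
  proof
    fix l assume "l \<in> (\<Union>x\<in>R. conj_class G (\<Lambda> x))"
    then obtain x where x1: "x \<in> R" "l \<in> conj_class G (\<Lambda> x)" by blast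
    then obtain h where x2: "h \<in> G" "l = conj (\<Lambda> x) h" unfolding conj_class_def by blast
    note x = x1(1) x2
    have xX: "x \<in> X" using x R_sub by auto
    have "l = rack_of R g \<Lambda> (h x)" unfolding L_conj[OF F xX x(2)] L_rep[OF F x(1)] x(3) ..
    moreover have "h x \<in> X" using permutes_in_image[OF G_perm[OF x(2)]] xX by simp
    ultimately show "l \<in> rack_of R g \<Lambda> ` X" by auto
  qed
next
  show "rack_of R g \<Lambda> ` X \<subseteq> (\<Union>x\<in>R. conj_class G (\<Lambda> x))"
  proof
    fix l assume "l \<in> rack_of R g \<Lambda> ` X"
    then obtain y where y: "y \<in> X" "l = rack_of R g \<Lambda> y" by auto
    have r: "inv (g y) y \<in> R" "g y \<in> G" using rep_X[OF y(1)] by auto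
    have "l \<in> conj_class G (\<Lambda> (inv (g y) y))"
      unfolding conj_class_def y(2) rack_of_def using r(2) by blast
    then show "l \<in> (\<Union>x\<in>R. conj_class G (\<Lambda> x))" using r(1) by blast
  qed
qed

end

context ctx
begin

lemma F_perm: "f \<in> normalizer X G \<Longrightarrow> f permutes X"
  by (simp add: normalizer_def)
lemma F_bij: "f \<in> normalizer X G \<Longrightarrow> bij f"
  using F_perm permutes_bij by blast
lemma F_img: "f \<in> normalizer X G \<Longrightarrow> (\<lambda>h. conj h f) ` G = G"
  by (simp add: normalizer_def)
lemma F_conjG: "f \<in> normalizer X G \<Longrightarrow> h \<in> G \<Longrightarrow> conj h f \<in> G"
proof -
  assume f: "f \<in> normalizer X G" and h: "h \<in> G"
  have "conj h f \<in> (\<lambda>h. conj h f) ` G" using h by (rule imageI)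
  then show ?thesis unfolding F_img[OF f] .
qed
lemma F_inv_img: assumes f: "f \<in> normalizer X G" shows "(\<lambda>h. conj h (inv f)) ` G = G"
proof -
  have "(\<lambda>h. conj h (inv f)) ` G = (\<lambda>h. conj h (inv f)) ` (\<lambda>h. conj h f) ` G"
    using F_img[OF f] by simp
  also have "\<dots> = G" by (simp add: image_image conj_cancel1[OF F_bij[OF f]])
  finally show ?thesis .
qed
lemma F_conjG_inv: "f \<in> normalizer X G \<Longrightarrow> h \<in> G \<Longrightarrow> conj h (inv f) \<in> G"
proof -
  assume f: "f \<in> normalizer X G" and h: "h \<in> G"
  have "conj h (inv f) \<in> (\<lambda>h. conj h (inv f)) ` G" using h by (rule imageI)
  then show ?thesis unfolding F_inv_img[OF f] .
qed
lemma F_inv: "f \<in> normalizer X G \<Longrightarrow> inv f \<in> normalizer X G"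
proof -
  assume f: "f \<in> normalizer X G"
  show ?thesis unfolding normalizer_def using F_inv_img[OF f] permutes_inv[OF F_perm[OF f]] by simp
qed
lemma F_comp: assumes f: "f \<in> normalizer X G" and f': "f' \<in> normalizer X G"
  shows "f' \<circ> f \<in> normalizer X G"
proof -
  have "(\<lambda>h. conj h (f' \<circ> f)) ` G = (\<lambda>h. conj h f') ` (\<lambda>h. conj h f) ` G"
    by (simp add: image_image conj_conj[OF F_bij[OF f] F_bij[OF f']])
  also have "\<dots> = G" using F_img[OF f] F_img[OF f'] by simp
  finally show ?thesis unfolding normalizer_def
    using permutes_compose[OF F_perm[OF f] F_perm[OF f']] by simp
qed

lemma cent_conj:
  assumes f: "f \<in> normalizer X G" and cG: "c \<in> G"
    and comm: "\<And>h. h \<in> stab G y \<Longrightarrow> c \<circ> h = h \<circ> c"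
  shows "conj c f \<in> centralizer G (stab G (f y))"
  unfolding centralizer_def
proof (intro CollectI conjI ballI)
  show "conj c f \<in> G" using F_conjG[OF f cG] .
  fix h assume h: "h \<in> stab G (f y)"
  have bf: "bij f" using F_bij[OF f] .
  define h' where "h' = conj h (inv f)"
  have h'G: "h' \<in> G" unfolding h'_def using F_conjG_inv[OF f] h by (auto simp: stab_def)
  have "h' y = inv f (h (f y))" unfolding h'_def conj_def inv_inv_eq[OF bf] by simp
  also have "\<dots> = y" using h bf by (simp add: stab_def bij_is_inj)
  finally have "h' \<in> stab G y" using h'G by (simp add: stab_def)
  then have cc: "c \<circ> h' = h' \<circ> c" by (rule comm)
  have hh: "h = conj h' f" unfolding h'_def by (rule conj_cancel2[OF bf, symmetric])
  show "conj c f \<circ> h = h \<circ> conj c f"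
    unfolding hh conj_comp[OF bf] cc ..
qed

lemma act_R: "x \<in> R \<Longrightarrow> act R g f \<Lambda> x = conj (rack_of R g \<Lambda> (inv f x)) f"
  by (simp add: act_def rack_of_def Let_def)
lemma act_nR: "x \<notin> R \<Longrightarrow> act R g f \<Lambda> x = id"
  by (simp add: act_def)

lemma invf_X: "f \<in> normalizer X G \<Longrightarrow> x \<in> X \<Longrightarrow> inv f x \<in> X"
proof -
  assume f: "f \<in> normalizer X G" and x: "x \<in> X"
  have "inv f permutes X" using permutes_inv[OF F_perm[OF f]] .
  from permutes_in_image[OF this, of x] x show ?thesis by simp
qed

lemma act_Fol_r:
  assumes F: "\<Lambda> \<in> Fol_r G R" and f: "f \<in> normalizer X G"
  shows "act R g f \<Lambda> \<in> Fol_r G R"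
  unfolding Fol_r_def
proof (intro CollectI conjI allI ballI impI)
  fix x assume x: "x \<in> R"
  define y where "y = inv f x"
  have yX: "y \<in> X" unfolding y_def using invf_X[OF f] x R_sub by auto
  have fy: "f y = x" unfolding y_def using permutes_inverses(1)[OF F_perm[OF f]] .
  have "conj (rack_of R g \<Lambda> y) f \<in> centralizer G (stab G (f y))"
    by (rule cent_conj[OF f L_G[OF F yX]]) (rule L_cent[OF F yX])
  then show "act R g f \<Lambda> x \<in> centralizer G (stab G x)"
    unfolding act_R[OF x] y_def[symmetric] fy .
next
  fix x assume "x \<notin> R" then show "act R g f \<Lambda> x = id" by (rule act_nR)
qed

lemma act_Fol_q:
  assumes F: "\<Lambda> \<in> Fol_q G R" and f: "f \<in> normalizer X G"
  shows "act R g f \<Lambda> \<in> Fol_q G R"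
  unfolding Fol_q_def
proof (intro CollectI conjI allI ballI impI)
  fix x assume x: "x \<in> R"
  have Fr: "\<Lambda> \<in> Fol_r G R" using Fq_r[OF F] .
  define y where "y = inv f x"
  have yX: "y \<in> X" unfolding y_def using invf_X[OF f] x R_sub by auto
  have fy: "f y = x" unfolding y_def using permutes_inverses(1)[OF F_perm[OF f]] .
  have c: "conj (rack_of R g \<Lambda> y) f \<in> centralizer G (stab G (f y))"
    by (rule cent_conj[OF f L_G[OF Fr yX]]) (rule L_cent[OF Fr yX])
  have "conj (rack_of R g \<Lambda> y) f (f y) = f y"
    using conj_app[OF F_bij[OF f]] L_fix[OF F yX] by simp
  then have "conj (rack_of R g \<Lambda> y) f \<in> center (stab G (f y))"
    using c by (auto simp: center_def centralizer_def stab_def)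
  then show "act R g f \<Lambda> x \<in> center (stab G x)"
    unfolding act_R[OF x] y_def[symmetric] fy .
next
  fix x assume "x \<notin> R" then show "act R g f \<Lambda> x = id" by (rule act_nR)
qed

lemma act_L:
  assumes F: "\<Lambda> \<in> Fol_r G R" and f: "f \<in> normalizer X G" and z: "z \<in> X"
  shows "rack_of R g (act R g f \<Lambda>) z = conj (rack_of R g \<Lambda> (inv f z)) f"
proof -
  define r where "r = inv (g z) z"
  have r: "r \<in> R" "g z \<in> G" "g z r = z" using rep_X[OF z] r_def by auto
  have bf: "bij f" using F_bij[OF f] .
  have fp: "f permutes X" using F_perm[OF f] .
  define u where "u = inv f r"
  have uX: "u \<in> X" unfolding u_def using invf_X[OF f] r R_sub by auto
  define k where "k = conj (g z) (inv f)"
  have kG: "k \<in> G" unfolding k_def by (rule F_conjG_inv[OF f r(2)])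
  have ku: "k u = inv f z" unfolding k_def u_def conj_def inv_inv_eq[OF bf]
    using permutes_inverses(1)[OF fp] r(3) by simp
  have fk: "f \<circ> k = g z \<circ> f" unfolding k_def conj_def inv_inv_eq[OF bf]
    by (simp add: comp_assoc[symmetric] permutes_inv_o(1)[OF fp])
  have "rack_of R g (act R g f \<Lambda>) z = conj (act R g f \<Lambda> r) (g z)"
    unfolding rack_of_def r_def ..
  also have "\<dots> = conj (conj (rack_of R g \<Lambda> u) f) (g z)"
    unfolding act_R[OF r(1)] u_def ..
  also have "\<dots> = conj (rack_of R g \<Lambda> u) (g z \<circ> f)"
    by (rule conj_conj[OF bf G_bij[OF r(2)]])
  also have "\<dots> = conj (conj (rack_of R g \<Lambda> u) k) f"
    unfolding fk[symmetric] by (rule conj_conj[OF G_bij[OF kG] bf, symmetric])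
  also have "\<dots> = conj (rack_of R g \<Lambda> (inv f z)) f"
    unfolding ku[symmetric] L_conj[OF F uX kG] ..
  finally show ?thesis .
qed

lemma act_id: assumes F: "\<Lambda> \<in> Fol_r G R" shows "act R g id \<Lambda> = \<Lambda>"
proof
  fix x show "act R g id \<Lambda> x = \<Lambda> x"
  proof (cases "x \<in> R")
    case True
    then show ?thesis unfolding act_R[OF True] inv_id conj_id id_apply using L_rep[OF F True] by simp
  next
    case False
    then show ?thesis using act_nR Fr_out[OF F] by simp
  qed
qed

lemma act_comp:
  assumes F: "\<Lambda> \<in> Fol_r G R" and f: "f \<in> normalizer X G" and f': "f' \<in> normalizer X G"
  shows "act R g (f' \<circ> f) \<Lambda> = act R g f' (act R g f \<Lambda>)"
proof
  fix x show "act R g (f' \<circ> f) \<Lambda> x = act R g f' (act R g f \<Lambda>) x"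
  proof (cases "x \<in> R")
    case True
    have xX: "inv f' x \<in> X" using invf_X[OF f'] True R_sub by auto
    have "act R g (f' \<circ> f) \<Lambda> x = conj (rack_of R g \<Lambda> (inv f (inv f' x))) (f' \<circ> f)"
      unfolding act_R[OF True] o_inv_distrib[OF F_bij[OF f'] F_bij[OF f]] by simp
    also have "\<dots> = conj (conj (rack_of R g \<Lambda> (inv f (inv f' x))) f) f'"
      by (rule conj_conj[OF F_bij[OF f] F_bij[OF f'], symmetric])
    also have "\<dots> = act R g f' (act R g f \<Lambda>) x"
      unfolding act_R[OF True] act_L[OF F f xX] ..
    finally show ?thesis .
  next
    case False
    then show ?thesis using act_nR by simp
  qed
qed

lemma Lset_act:
  assumes F: "\<Lambda> \<in> Fol_r G R" and f: "f \<in> normalizer X G"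
  shows "rack_of R g (act R g f \<Lambda>) ` X = (\<lambda>h. conj h f) ` (rack_of R g \<Lambda> ` X)"
proof -
  have "rack_of R g (act R g f \<Lambda>) ` X = (\<lambda>z. conj (rack_of R g \<Lambda> (inv f z)) f) ` X"
    using act_L[OF F f] by auto
  also have "\<dots> = (\<lambda>h. conj h f) ` (rack_of R g \<Lambda> ` (inv f ` X))"
    by (simp add: image_image)
  also have "inv f ` X = X" using permutes_image[OF permutes_inv[OF F_perm[OF f]]] .
  finally show ?thesis .
qed

lemma L_sub: "\<Lambda> \<in> Fol_r G R \<Longrightarrow> rack_of R g \<Lambda> ` X \<subseteq> {p. p permutes X}"
  using L_perm by auto

lemma gen_iff: "\<Lambda> \<in> Fol_r G R \<Longrightarrow> generates X G R \<Lambda> \<longleftrightarrow> perm_gen X (rack_of R g \<Lambda> ` X) = G"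
  unfolding generates_def using Lset by simp

lemma act_gen:
  assumes F: "\<Lambda> \<in> Fol_r G R" and f: "f \<in> normalizer X G" and gen: "generates X G R \<Lambda>"
  shows "generates X G R (act R g f \<Lambda>)"
proof -
  have F': "act R g f \<Lambda> \<in> Fol_r G R" using act_Fol_r[OF F f] .
  have "perm_gen X (rack_of R g (act R g f \<Lambda>) ` X) = (\<lambda>h. conj h f) ` perm_gen X (rack_of R g \<Lambda> ` X)"
    unfolding Lset_act[OF F f] by (rule perm_gen_conj[OF F_perm[OF f] L_sub[OF F], symmetric])
  also have "\<dots> = G" using gen gen_iff[OF F] F_img[OF f] by simp
  finally show ?thesis using gen_iff[OF F'] by simp
qed

end

context ctx
begin

lemma Lperm_L: "\<Lambda> \<in> Fol_r G R \<Longrightarrow> x \<in> X \<Longrightarrow> Lperm X (rack_of R g \<Lambda>) x = rack_of R g \<Lambda> x"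
proof
  fix y assume F: "\<Lambda> \<in> Fol_r G R" and x: "x \<in> X"
  show "Lperm X (rack_of R g \<Lambda>) x y = rack_of R g \<Lambda> x y"
    using permutes_not_in[OF L_perm[OF F x], of y] by (simp add: Lperm_def)
qed

lemma rack_ok:
  assumes F: "\<Lambda> \<in> Fol_r G R" and gen: "generates X G R \<Lambda>"
  shows "rack_on X (rack_of R g \<Lambda>) \<and> LMlt X (rack_of R g \<Lambda>) = G"
proof
  let ?L = "rack_of R g \<Lambda>"
  show "rack_on X ?L" unfolding rack_on_def
  proof (intro conjI ballI)
    fix x y assume x: "x \<in> X" and y: "y \<in> X"
    show "?L x y \<in> X" using permutes_in_image[OF L_perm[OF F x], of y] y by simp
  next
    fix x assume x: "x \<in> X"
    show "bij_betw (?L x) X X" using permutes_imp_bij[OF L_perm[OF F x]] .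
  next
    fix x y z assume x: "x \<in> X" and y: "y \<in> X" and z: "z \<in> X"
    have "?L (?L x y) = conj (?L y) (?L x)" using L_conj[OF F y L_G[OF F x]] .
    then show "?L x (?L y z) = ?L (?L x y) (?L x z)"
      using conj_app[OF G_bij[OF L_G[OF F x]]] by simp
  qed
  have "Lperm X ?L ` X = ?L ` X" using Lperm_L[OF F] by simp
  then show "LMlt X ?L = G" unfolding LMlt_def using gen gen_iff[OF F] by simp
qed

lemma quandle_ok:
  assumes F: "\<Lambda> \<in> Fol_q G R" and gen: "generates X G R \<Lambda>"
  shows "quandle_on X (rack_of R g \<Lambda>) \<and> LMlt X (rack_of R g \<Lambda>) = G"
  using rack_ok[OF Fq_r[OF F] gen] L_fix[OF F] by (simp add: quandle_on_def)

lemma iso_fwd: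
  assumes F: "\<Lambda> \<in> Fol_r G R" and f: "f \<in> normalizer X G"
  shows "rack_iso X (rack_of R g \<Lambda>) (rack_of R g (act R g f \<Lambda>))"
  unfolding rack_iso_def
proof (intro exI conjI ballI)
  show "bij_betw f X X" using permutes_imp_bij[OF F_perm[OF f]] .
  fix x y assume x: "x \<in> X" and y: "y \<in> X"
  have fx: "f x \<in> X" using permutes_in_image[OF F_perm[OF f], of x] x by simp
  have "rack_of R g (act R g f \<Lambda>) (f x) = conj (rack_of R g \<Lambda> x) f"
    using act_L[OF F f fx] permutes_inverses(2)[OF F_perm[OF f]] by simp
  then show "f (rack_of R g \<Lambda> x y) = rack_of R g (act R g f \<Lambda>) (f x) (f y)"
    using conj_app[OF F_bij[OF f]] by simp
qed

lemma iso_bwd: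
  assumes F: "\<Lambda> \<in> Fol_r G R" and gen: "generates X G R \<Lambda>"
    and F': "\<Lambda>' \<in> Fol_r G R" and gen': "generates X G R \<Lambda>'"
    and iso: "rack_iso X (rack_of R g \<Lambda>) (rack_of R g \<Lambda>')"
  shows "\<exists>f\<in>normalizer X G. act R g f \<Lambda> = \<Lambda>'"
proof -
  let ?L = "rack_of R g \<Lambda>" and ?L' = "rack_of R g \<Lambda>'"
  obtain \<phi> where phi: "bij_betw \<phi> X X" and hom: "\<And>x y. x \<in> X \<Longrightarrow> y \<in> X \<Longrightarrow> \<phi> (?L x y) = ?L' (\<phi> x) (\<phi> y)"
    using iso unfolding rack_iso_def by blast
  define f where "f = (\<lambda>x. if x \<in> X then \<phi> x else x)"
  have bf0: "bij_betw f X X" using phi unfolding f_def by (rule bij_betw_cong[THEN iffD1, rotated]) simp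
  have fp: "f permutes X" by (rule bij_imp_permutes[OF bf0]) (simp add: f_def)
  have bf: "bij f" using permutes_bij[OF fp] .
  have fX: "\<And>x. x \<in> X \<Longrightarrow> f x = \<phi> x" unfolding f_def by simp
  have fin: "\<And>x. x \<in> X \<Longrightarrow> f x \<in> X" using permutes_in_image[OF fp] by simp
  have key: "conj (?L x) f = ?L' (f x)" if x: "x \<in> X" for x
  proof
    fix z show "conj (?L x) f z = ?L' (f x) z"
    proof (cases "z \<in> X")
      case True
      define u where "u = inv f z"
      have uX: "u \<in> X" unfolding u_def using permutes_in_image[OF permutes_inv[OF fp], of z] True by simp
      have zu: "z = f u" unfolding u_def using permutes_inverses(1)[OF fp] by simp
      have LuX: "?L x u \<in> X" using permutes_in_image[OF L_perm[OF F x], of u] uX by simp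
      have "conj (?L x) f z = f (?L x u)" unfolding zu by (rule conj_app[OF bf])
      also have "\<dots> = ?L' (f x) z" unfolding zu fX[OF LuX] fX[OF x] fX[OF uX] by (rule hom[OF x uX])
      finally show ?thesis .
    next
      case False
      have "inv f z = z" using permutes_not_in[OF permutes_inv[OF fp] False] .
      then have "conj (?L x) f z = z" unfolding conj_def
        using permutes_not_in[OF L_perm[OF F x] False] permutes_not_in[OF fp False] by simp
      moreover have "?L' (f x) z = z" using permutes_not_in[OF L_perm[OF F' fin[OF x]] False] .
      ultimately show ?thesis by simp
    qed
  qed
  have img: "(\<lambda>h. conj h f) ` (?L ` X) = ?L' ` X"
  proof -
    have "(\<lambda>h. conj h f) ` (?L ` X) = (\<lambda>x. ?L' (f x)) ` X"
      unfolding image_image using key by simp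
    also have "\<dots> = ?L' ` (f ` X)" by (simp add: image_image)
    also have "f ` X = X" using permutes_image[OF fp] .
    finally show ?thesis .
  qed
  have fN: "f \<in> normalizer X G"
  proof -
    have "(\<lambda>h. conj h f) ` G = (\<lambda>h. conj h f) ` perm_gen X (?L ` X)" using gen gen_iff[OF F] by simp
    also have "\<dots> = perm_gen X (?L' ` X)" unfolding img[symmetric] by (rule perm_gen_conj[OF fp L_sub[OF F]])
    also have "\<dots> = G" using gen' gen_iff[OF F'] by simp
    finally show ?thesis unfolding normalizer_def using fp by simp
  qed
  have "act R g f \<Lambda> = \<Lambda>'"
  proof
    fix x show "act R g f \<Lambda> x = \<Lambda>' x"
    proof (cases "x \<in> R")
      case True
      have xX: "x \<in> X" using True R_sub by auto
      have ix: "inv f x \<in> X" using permutes_in_image[OF permutes_inv[OF fp], of x] xX by simp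
      have "act R g f \<Lambda> x = ?L' (f (inv f x))" unfolding act_R[OF True] by (rule key[OF ix])
      also have "\<dots> = \<Lambda>' x" using permutes_inverses(1)[OF fp] L_rep[OF F' True] by simp
      finally show ?thesis .
    next
      case False
      then show ?thesis using act_nR Fr_out[OF F'] by simp
    qed
  qed
  then show ?thesis using fN by blast
qed

lemma realize:
  assumes rk: "rack_on X op" and lm: "LMlt X op = G"
  shows "\<exists>\<Lambda>\<in>Env_r X G R. rack_iso X op (rack_of R g \<Lambda>) \<and> (quandle_on X op \<longrightarrow> \<Lambda> \<in> Env_q X G R)"
proof -
  define Lp where "Lp = Lperm X op"
  have opX: "\<And>x y. x \<in> X \<Longrightarrow> y \<in> X \<Longrightarrow> op x y \<in> X" using rk unfolding rack_on_def by blast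
  have opb: "\<And>x. x \<in> X \<Longrightarrow> bij_betw (op x) X X" using rk unfolding rack_on_def by blast
  have dist: "\<And>x y z. x \<in> X \<Longrightarrow> y \<in> X \<Longrightarrow> z \<in> X \<Longrightarrow> op x (op y z) = op (op x y) (op x z)"
    using rk unfolding rack_on_def by blast
  have Lpp: "Lp x permutes X" if x: "x \<in> X" for x
  proof (rule bij_imp_permutes)
    show "bij_betw (Lp x) X X" using opb[OF x] unfolding Lp_def Lperm_def
      by (rule bij_betw_cong[THEN iffD1, rotated]) simp
    show "\<And>y. y \<notin> X \<Longrightarrow> Lp x y = y" by (simp add: Lp_def Lperm_def)
  qed
  have LpX: "\<And>x y. x \<in> X \<Longrightarrow> y \<in> X \<Longrightarrow> Lp x y = op x y" by (simp add: Lp_def Lperm_def)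
  have Lsub: "Lp ` X \<subseteq> {p. p permutes X}" using Lpp by auto
  have GLp: "perm_gen X (Lp ` X) = G" using lm unfolding LMlt_def Lp_def .
  have LpG: "Lp x \<in> G" if "x \<in> X" for x
    using perm_gen_subgroup(2)[OF Lsub] that GLp by auto
  define K where "K = {h. h permutes X \<and> (\<forall>x\<in>X. conj (Lp x) h = Lp (h x))}"
  have Kin: "\<And>h x. h \<in> K \<Longrightarrow> x \<in> X \<Longrightarrow> conj (Lp x) h = Lp (h x)" unfolding K_def by blast
  have Kp: "\<And>h. h \<in> K \<Longrightarrow> h permutes X" unfolding K_def by blast
  have hX: "h x \<in> X" if "h permutes X" "x \<in> X" for h x using permutes_in_image[OF that(1), of x] that(2) by simp
  have Ksub: "perm_subgroup X K" unfolding perm_subgroup_def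
  proof (intro conjI ballI)
    show "K \<subseteq> {p. p permutes X}" using Kp by auto
    show "id \<in> K" unfolding K_def using permutes_id by simp
  next
    fix p q assume p: "p \<in> K" and q: "q \<in> K"
    have bp: "bij p" "bij q" using Kp p q permutes_bij by blast+
    have "conj (Lp x) (p \<circ> q) = Lp ((p \<circ> q) x)" if x: "x \<in> X" for x
    proof -
      have "conj (Lp x) (p \<circ> q) = conj (conj (Lp x) q) p" by (rule conj_conj[OF bp(2) bp(1), symmetric])
      also have "\<dots> = conj (Lp (q x)) p" using Kin[OF q x] by simp
      also have "\<dots> = Lp (p (q x))" using Kin[OF p hX[OF Kp[OF q] x]] .
      finally show ?thesis by simp
    qed
    then show "p \<circ> q \<in> K" unfolding K_def using permutes_compose[OF Kp[OF q] Kp[OF p]] by blast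
  next
    fix p assume p: "p \<in> K"
    have pp: "p permutes X" using Kp[OF p] .
    have bp: "bij p" using permutes_bij[OF pp] .
    have "conj (Lp x) (inv p) = Lp (inv p x)" if x: "x \<in> X" for x
    proof -
      define u where "u = inv p x"
      have uX: "u \<in> X" unfolding u_def using hX[OF permutes_inv[OF pp] x] .
      have xu: "x = p u" unfolding u_def using permutes_inverses(1)[OF pp] by simp
      have "conj (Lp x) (inv p) = conj (conj (Lp u) p) (inv p)" unfolding xu Kin[OF p uX] ..
      also have "\<dots> = Lp u" by (rule conj_cancel1[OF bp])
      finally show ?thesis unfolding u_def .
    qed
    then show "inv p \<in> K" unfolding K_def using permutes_inv[OF pp] by blast
  qed
  have genK: "Lp y \<in> K" if y: "y \<in> X" for y
  proof -
    have "conj (Lp x) (Lp y) = Lp (Lp y x)" if x: "x \<in> X" for x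
    proof
      fix z show "conj (Lp x) (Lp y) z = Lp (Lp y x) z"
      proof (cases "z \<in> X")
        case True
        define w where "w = inv (Lp y) z"
        have wX: "w \<in> X" unfolding w_def using hX[OF permutes_inv[OF Lpp[OF y]] True] .
        have zw: "z = Lp y w" unfolding w_def using permutes_inverses(1)[OF Lpp[OF y]] by simp
        have "conj (Lp x) (Lp y) z = Lp y (Lp x w)" unfolding zw by (rule conj_app[OF permutes_bij[OF Lpp[OF y]]])
        also have "\<dots> = op y (op x w)" using LpX x y wX opX by simp
        also have "\<dots> = op (op y x) (op y w)" by (rule dist[OF y x wX])
        also have "\<dots> = Lp (Lp y x) z" unfolding zw using LpX x y wX opX by simp
        finally show ?thesis .
      next
        case False
        have "inv (Lp y) z = z" using permutes_not_in[OF permutes_inv[OF Lpp[OF y]] False] .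
        then have "conj (Lp x) (Lp y) z = z" unfolding conj_def
          using permutes_not_in[OF Lpp[OF x] False] permutes_not_in[OF Lpp[OF y] False] by simp
        moreover have "Lp (Lp y x) z = z" by (simp add: Lp_def Lperm_def False)
        ultimately show ?thesis by simp
      qed
    qed
    then show ?thesis unfolding K_def using Lpp[OF y] by blast
  qed
  have GK: "G \<subseteq> K" unfolding GLp[symmetric] by (rule perm_gen_least[OF Ksub]) (use genK in blast)
  have Lpc: "\<And>h x. h \<in> G \<Longrightarrow> x \<in> X \<Longrightarrow> conj (Lp x) h = Lp (h x)" using GK Kin by blast
  define \<Lambda> where "\<Lambda> = (\<lambda>r. if r \<in> R then Lp r else id)"
  have comm: "Lp r \<circ> h = h \<circ> Lp r" if r: "r \<in> R" and h: "h \<in> stab G r" for r h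
  proof -
    have hG: "h \<in> G" and hr: "h r = r" using h by (auto simp: stab_def)
    have "conj (Lp r) h = Lp r" using Lpc[OF hG] r R_sub hr by auto
    from conj_fixed_commute[OF G_bij[OF hG] this] show ?thesis by simp
  qed
  have Fr: "\<Lambda> \<in> Fol_r G R" unfolding Fol_r_def centralizer_def \<Lambda>_def
    using LpG R_sub comm by auto
  have rk_eq: "rack_of R g \<Lambda> y = Lp y" if y: "y \<in> X" for y
  proof -
    have r: "inv (g y) y \<in> R" "g y \<in> G" "g y (inv (g y) y) = y" using rep_X[OF y] by auto
    have "rack_of R g \<Lambda> y = conj (Lp (inv (g y) y)) (g y)" unfolding rack_of_def \<Lambda>_def using r by simp
    also have "\<dots> = Lp y" using Lpc[OF r(2)] r R_sub by auto
    finally show ?thesis .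
  qed
  have "rack_of R g \<Lambda> ` X = Lp ` X" using rk_eq by simp
  then have gen: "generates X G R \<Lambda>" using gen_iff[OF Fr] GLp by simp
  have iso: "rack_iso X op (rack_of R g \<Lambda>)" unfolding rack_iso_def
    by (rule exI[of _ id]) (simp add: rk_eq LpX)
  have q: "\<Lambda> \<in> Env_q X G R" if qu: "quandle_on X op"
  proof -
    have "Lp r r = r" if r: "r \<in> R" for r
      using qu r R_sub LpX by (auto simp: quandle_on_def)
    then have "\<Lambda> \<in> Fol_q G R" unfolding Fol_q_def center_def \<Lambda>_def
      using LpG R_sub comm by (auto simp: stab_def)
    then show ?thesis using gen by (simp add: Env_q_def)
  qed
  show ?thesis using Fr gen iso q by (auto simp: Env_r_def)
qed

end

context ctx
begin

lemma Envr_Fol: "\<Lambda> \<in> Env_r X G R \<Longrightarrow> \<Lambda> \<in> Fol_r G R" by (simp add: Env_r_def)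
lemma Envq_Fol: "\<Lambda> \<in> Env_q X G R \<Longrightarrow> \<Lambda> \<in> Fol_q G R" by (simp add: Env_q_def)
lemma Env_gen_r: "\<Lambda> \<in> Env_r X G R \<Longrightarrow> generates X G R \<Lambda>" by (simp add: Env_r_def)
lemma Env_gen_q: "\<Lambda> \<in> Env_q X G R \<Longrightarrow> generates X G R \<Lambda>" by (simp add: Env_q_def)

lemma act_Env_r: "\<Lambda> \<in> Env_r X G R \<Longrightarrow> f \<in> normalizer X G \<Longrightarrow> act R g f \<Lambda> \<in> Env_r X G R"
  using act_Fol_r act_gen by (simp add: Env_r_def)
lemma act_Env_q: "\<Lambda> \<in> Env_q X G R \<Longrightarrow> f \<in> normalizer X G \<Longrightarrow> act R g f \<Lambda> \<in> Env_q X G R"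
  using act_Fol_q act_gen Fq_r by (simp add: Env_q_def)

lemma act_shift:
  assumes F: "\<Lambda> \<in> Fol_r G R" and f0: "f0 \<in> normalizer X G" and f: "f \<in> normalizer X G"
  shows "act R g f \<Lambda> = act R g (f \<circ> inv f0) (act R g f0 \<Lambda>)"
proof -
  have "(f \<circ> inv f0) \<circ> f0 = f"
    by (simp add: comp_assoc permutes_inv_o(2)[OF F_perm[OF f0]])
  then show ?thesis using act_comp[OF F f0 F_comp[OF F_inv[OF f0] f]] by simp
qed

lemma tri:
  assumes "S \<subseteq> Fol_r G R" and "\<forall>\<Lambda>\<in>S. \<forall>f\<in>normalizer X G. act R g f \<Lambda> \<in> S"
  shows "(\<forall>\<Lambda>\<in>S. \<forall>f\<in>normalizer X G. act R g f \<Lambda> \<in> S) \<and>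
        (\<forall>\<Lambda>\<in>S. act R g id \<Lambda> = \<Lambda>) \<and>
        (\<forall>\<Lambda>\<in>S. \<forall>f\<in>normalizer X G. \<forall>f'\<in>normalizer X G. act R g (f' \<circ> f) \<Lambda> = act R g f' (act R g f \<Lambda>))"
proof -
  have a: "\<forall>\<Lambda>\<in>S. act R g id \<Lambda> = \<Lambda>"
  proof
    fix \<Lambda> assume "\<Lambda> \<in> S"
    then have F: "\<Lambda> \<in> Fol_r G R" using assms(1) by blast
    show "act R g id \<Lambda> = \<Lambda>" by (rule act_id[OF F])
  qed
  have b: "\<forall>\<Lambda>\<in>S. \<forall>f\<in>normalizer X G. \<forall>f'\<in>normalizer X G. act R g (f' \<circ> f) \<Lambda> = act R g f' (act R g f \<Lambda>)"
  proof (intro ballI)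
    fix \<Lambda> f f' assume "\<Lambda> \<in> S" "f \<in> normalizer X G" "f' \<in> normalizer X G"
    then show "act R g (f' \<circ> f) \<Lambda> = act R g f' (act R g f \<Lambda>)" using act_comp assms(1) by blast
  qed
  show ?thesis using assms(2) a b by (intro conjI)
qed

lemma part_i:
  "\<forall>S \<in> {Fol_r G R, Fol_q G R, Env_r X G R, Env_q X G R}.
        (\<forall>\<Lambda>\<in>S. \<forall>f\<in>normalizer X G. act R g f \<Lambda> \<in> S) \<and>
        (\<forall>\<Lambda>\<in>S. act R g id \<Lambda> = \<Lambda>) \<and>
        (\<forall>\<Lambda>\<in>S. \<forall>f\<in>normalizer X G. \<forall>f'\<in>normalizer X G. act R g (f' \<circ> f) \<Lambda> = act R g f' (act R g f \<Lambda>))"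
proof -
  have s: "Fol_r G R \<subseteq> Fol_r G R" "Fol_q G R \<subseteq> Fol_r G R" "Env_r X G R \<subseteq> Fol_r G R" "Env_q X G R \<subseteq> Fol_r G R"
    using Fq_r Envr_Fol Envq_Fol by blast+
  have c: "\<forall>\<Lambda>\<in>Fol_r G R. \<forall>f\<in>normalizer X G. act R g f \<Lambda> \<in> Fol_r G R"
    "\<forall>\<Lambda>\<in>Fol_q G R. \<forall>f\<in>normalizer X G. act R g f \<Lambda> \<in> Fol_q G R"
    "\<forall>\<Lambda>\<in>Env_r X G R. \<forall>f\<in>normalizer X G. act R g f \<Lambda> \<in> Env_r X G R"
    "\<forall>\<Lambda>\<in>Env_q X G R. \<forall>f\<in>normalizer X G. act R g f \<Lambda> \<in> Env_q X G R"
    using act_Fol_r act_Fol_q act_Env_r act_Env_q by blast+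
  show ?thesis unfolding ball_simps
    by (intro conjI TrueI tri[OF s(1) c(1)] tri[OF s(2) c(2)] tri[OF s(3) c(3)] tri[OF s(4) c(4)])
qed

end

theorem theorem3p6:
  fixes X :: "'a set" and G :: "('a \<Rightarrow> 'a) set" and R :: "'a set"
    and g :: "'a \<Rightarrow> ('a \<Rightarrow> 'a)"
  assumes "X \<noteq> {}"
    and "perm_subgroup X G"
    and "orbit_reps X G R"
    and "\<forall>x\<in>R. \<forall>y\<in>orbit G x. g y \<in> G \<and> g y x = y"
  defines "F \<equiv> normalizer X G"
  shows
    \<comment> \<open>(i) action on each of the four sets\<close>
    "(\<forall>S \<in> {Fol_r G R, Fol_q G R, Env_r X G R, Env_q X G R}.
        (\<forall>\<Lambda>\<in>S. \<forall>f\<in>F. act R g f \<Lambda> \<in> S) \<and>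
        (\<forall>\<Lambda>\<in>S. act R g id \<Lambda> = \<Lambda>) \<and>
        (\<forall>\<Lambda>\<in>S. \<forall>f\<in>F. \<forall>f'\<in>F. act R g (f' \<circ> f) \<Lambda> = act R g f' (act R g f \<Lambda>)))
     \<and>
     \<comment> \<open>(ii) racks: the map Lambda to its rack induces a bijection orbits <-> iso types\<close>
     (\<forall>\<Lambda>\<in>Env_r X G R. rack_on X (rack_of R g \<Lambda>) \<and> LMlt X (rack_of R g \<Lambda>) = G)
     \<and> (\<forall>\<Lambda>\<in>Env_r X G R. \<forall>\<Lambda>'\<in>Env_r X G R.
          (\<exists>f\<in>F. act R g f \<Lambda> = \<Lambda>') \<longleftrightarrow> rack_iso X (rack_of R g \<Lambda>) (rack_of R g \<Lambda>'))
     \<and> (\<forall>op. rack_on X op \<and> LMlt X op = G \<longrightarrow>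
          (\<exists>\<Lambda>\<in>Env_r X G R. rack_iso X op (rack_of R g \<Lambda>)))
     \<and>
     \<comment> \<open>(ii) quandles\<close>
     (\<forall>\<Lambda>\<in>Env_q X G R. quandle_on X (rack_of R g \<Lambda>) \<and> LMlt X (rack_of R g \<Lambda>) = G)
     \<and> (\<forall>\<Lambda>\<in>Env_q X G R. \<forall>\<Lambda>'\<in>Env_q X G R.
          (\<exists>f\<in>F. act R g f \<Lambda> = \<Lambda>') \<longleftrightarrow> rack_iso X (rack_of R g \<Lambda>) (rack_of R g \<Lambda>'))
     \<and> (\<forall>op. quandle_on X op \<and> LMlt X op = G \<longrightarrow>
          (\<exists>\<Lambda>\<in>Env_q X G R. rack_iso X op (rack_of R g \<Lambda>)))
     \<and>
     \<comment> \<open>(iii)\<close>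
     (\<forall>\<Lambda>\<in>Fol_r G R. (\<exists>f\<in>F. act R g f \<Lambda> \<in> Env_r X G R) \<longrightarrow>
          (\<forall>f\<in>F. act R g f \<Lambda> \<in> Env_r X G R))
     \<and> (\<forall>\<Lambda>\<in>Fol_q G R. (\<exists>f\<in>F. act R g f \<Lambda> \<in> Env_q X G R) \<longrightarrow>
          (\<forall>f\<in>F. act R g f \<Lambda> \<in> Env_q X G R))"
proof -
  interpret ctx X G R g using assms(2-4) by (simp add: ctx_def)
  have p1: "\<forall>\<Lambda>\<in>Env_r X G R. rack_on X (rack_of R g \<Lambda>) \<and> LMlt X (rack_of R g \<Lambda>) = G"
    using rack_ok Envr_Fol Env_gen_r by blast
  have p2: "\<forall>\<Lambda>\<in>Env_r X G R. \<forall>\<Lambda>'\<in>Env_r X G R.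
          (\<exists>f\<in>F. act R g f \<Lambda> = \<Lambda>') \<longleftrightarrow> rack_iso X (rack_of R g \<Lambda>) (rack_of R g \<Lambda>')"
  proof (intro ballI iffI)
    fix \<Lambda> \<Lambda>' assume a: "\<Lambda> \<in> Env_r X G R" "\<Lambda>' \<in> Env_r X G R"
    { assume "\<exists>f\<in>F. act R g f \<Lambda> = \<Lambda>'"
      then obtain f where "f \<in> F" "act R g f \<Lambda> = \<Lambda>'" by blast
      then show "rack_iso X (rack_of R g \<Lambda>) (rack_of R g \<Lambda>')"
        using iso_fwd[OF Envr_Fol[OF a(1)]] unfolding F_def by blast }
    { assume "rack_iso X (rack_of R g \<Lambda>) (rack_of R g \<Lambda>')"
      then show "\<exists>f\<in>F. act R g f \<Lambda> = \<Lambda>'" unfolding F_def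
        using iso_bwd[OF Envr_Fol[OF a(1)] Env_gen_r[OF a(1)] Envr_Fol[OF a(2)] Env_gen_r[OF a(2)]] by blast }
  qed
  have p3: "\<forall>op. rack_on X op \<and> LMlt X op = G \<longrightarrow> (\<exists>\<Lambda>\<in>Env_r X G R. rack_iso X op (rack_of R g \<Lambda>))"
    using realize by blast
  have p4: "\<forall>\<Lambda>\<in>Env_q X G R. quandle_on X (rack_of R g \<Lambda>) \<and> LMlt X (rack_of R g \<Lambda>) = G"
    using quandle_ok Envq_Fol Env_gen_q by blast
  have p5: "\<forall>\<Lambda>\<in>Env_q X G R. \<forall>\<Lambda>'\<in>Env_q X G R.
          (\<exists>f\<in>F. act R g f \<Lambda> = \<Lambda>') \<longleftrightarrow> rack_iso X (rack_of R g \<Lambda>) (rack_of R g \<Lambda>')"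
  proof (intro ballI iffI)
    fix \<Lambda> \<Lambda>' assume a: "\<Lambda> \<in> Env_q X G R" "\<Lambda>' \<in> Env_q X G R"
    have r: "\<Lambda> \<in> Fol_r G R" "\<Lambda>' \<in> Fol_r G R" using a Envq_Fol Fq_r by blast+
    { assume "\<exists>f\<in>F. act R g f \<Lambda> = \<Lambda>'"
      then obtain f where "f \<in> F" "act R g f \<Lambda> = \<Lambda>'" by blast
      then show "rack_iso X (rack_of R g \<Lambda>) (rack_of R g \<Lambda>')"
        using iso_fwd[OF r(1)] unfolding F_def by blast }
    { assume "rack_iso X (rack_of R g \<Lambda>) (rack_of R g \<Lambda>')"
      then show "\<exists>f\<in>F. act R g f \<Lambda> = \<Lambda>'" unfolding F_def
        using iso_bwd[OF r(1) Env_gen_q[OF a(1)] r(2) Env_gen_q[OF a(2)]] by blast }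
  qed
  have p6: "\<forall>op. quandle_on X op \<and> LMlt X op = G \<longrightarrow> (\<exists>\<Lambda>\<in>Env_q X G R. rack_iso X op (rack_of R g \<Lambda>))"
  proof (intro allI impI)
    fix op assume a: "quandle_on X op \<and> LMlt X op = G"
    then have "rack_on X op" by (simp add: quandle_on_def)
    then show "\<exists>\<Lambda>\<in>Env_q X G R. rack_iso X op (rack_of R g \<Lambda>)" using realize[of op] a by blast
  qed
  have p7: "\<forall>\<Lambda>\<in>Fol_r G R. (\<exists>f\<in>F. act R g f \<Lambda> \<in> Env_r X G R) \<longrightarrow> (\<forall>f\<in>F. act R g f \<Lambda> \<in> Env_r X G R)"
  proof (intro ballI impI)
    fix \<Lambda> f assume a: "\<Lambda> \<in> Fol_r G R" "\<exists>f\<in>F. act R g f \<Lambda> \<in> Env_r X G R" and f: "f \<in> F"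
    then obtain f0 where f0: "f0 \<in> F" "act R g f0 \<Lambda> \<in> Env_r X G R" by blast
    have "act R g f \<Lambda> = act R g (f \<circ> inv f0) (act R g f0 \<Lambda>)"
      using act_shift[OF a(1)] f0 f unfolding F_def by blast
    moreover have "f \<circ> inv f0 \<in> normalizer X G" using F_comp F_inv f0 f unfolding F_def by blast
    ultimately show "act R g f \<Lambda> \<in> Env_r X G R" using act_Env_r f0 by simp
  qed
  have p8: "\<forall>\<Lambda>\<in>Fol_q G R. (\<exists>f\<in>F. act R g f \<Lambda> \<in> Env_q X G R) \<longrightarrow> (\<forall>f\<in>F. act R g f \<Lambda> \<in> Env_q X G R)"
  proof (intro ballI impI)
    fix \<Lambda> f assume a: "\<Lambda> \<in> Fol_q G R" "\<exists>f\<in>F. act R g f \<Lambda> \<in> Env_q X G R" and f: "f \<in> F"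
    then obtain f0 where f0: "f0 \<in> F" "act R g f0 \<Lambda> \<in> Env_q X G R" by blast
    have "act R g f \<Lambda> = act R g (f \<circ> inv f0) (act R g f0 \<Lambda>)"
      using act_shift[OF Fq_r[OF a(1)]] f0 f unfolding F_def by blast
    moreover have "f \<circ> inv f0 \<in> normalizer X G" using F_comp F_inv f0 f unfolding F_def by blast
    ultimately show "act R g f \<Lambda> \<in> Env_q X G R" using act_Env_q f0 by simp
  qed
  show ?thesis
    unfolding F_def by (intro conjI p1 p3 p4 p6) (fact part_i p2[unfolded F_def] p5[unfolded F_def] p7[unfolded F_def] p8[unfolded F_def])+
qed

end
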